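(* Let $A \in \mathbb{R}^{m \times r}$, $b \in \mathbb{R}^m$, $P = \{ x \in \mathbb{R}^r \mid Ax \ge b\}$, $C^r = \{ x \in \mathbb{R}^r \mid Ax \ge 0\}$, and \[ \tilde C = \{ (x, \xi, Ax - \xi b) \in \mathbb{R}^{r+1+m} \mid \xi \ge 0 \text{ and } Ax - \xi b \ge 0\}. \] Then: (1) for nonzero $x \in C^r$, $x$ is conformally non-decomposable in $C^r$ if and only if $(x, 0, Ax)$ is conformally non-decomposable in $\tilde C$; (2) for $x \in P$, $x$ is convex-conformally non-decomposable in $P$ if and only if $(x, 1, Ax - b)$ is conformally non-decomposable in $\tilde C$.
   Context: For $x \in \mathbb{R}^n$, $\operatorname{sign}(x) \in \{-,0,+\}^n$ is obtained by applying the sign function componentwise; the relations $0<-$, $0<+$ induce a componentwise partial order on $\{-,0,+\}^n$. For a convex cone $K$, a nonzero $x \in K$ is conformally non-decomposable in $K$ if for all nonzero $x^1,x^2 \in K$ with $\operatorname{sign}(x^1),\operatorname{sign}(x^2) \le \operatorname{sign}(x)$, $x = x^1 + x^2$ implies $x^1 = \lambda x^2$ for some $\lambda > 0$. A vector $x \in P$ is convex-conformally non-decomposable in $P$ if for all $x^1,x^2 \in P$ with $\operatorname{sign}(x^1),\operatorname{sign}(x^2) \le \operatorname{sign}(x)$ and all $0<\lambda<1$, $x = \lambda x^1 + (1-\lambda)x^2$ implies $x^1 = x^2$. *)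

theory Defs
  imports "HOL-Analysis.Analysis"
begin

text \<open>Componentwise sign order: sign(x) \<le> sign(y), where 0 < - and 0 < +.
  Components are the coordinates w.r.t. the standard basis (for products of
  spaces, the concatenated coordinates).\<close>
definition sign_le :: "'a::euclidean_space \<Rightarrow> 'a \<Rightarrow> bool" where
  "sign_le x y \<longleftrightarrow> (\<forall>i\<in>Basis. sgn (x \<bullet> i) = 0 \<or> sgn (x \<bullet> i) = sgn (y \<bullet> i))"

definition conf_nondec :: "'a::euclidean_space set \<Rightarrow> 'a \<Rightarrow> bool" where
  "conf_nondec K x \<longleftrightarrow> x \<in> K \<and> x \<noteq> 0 \<and>
     (\<forall>x1 x2. x1 \<in> K \<and> x2 \<in> K \<and> x1 \<noteq> 0 \<and> x2 \<noteq> 0 \<and> sign_le x1 x \<and> sign_le x2 x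
        \<and> x = x1 + x2 \<longrightarrow> (\<exists>c>0. x1 = c *\<^sub>R x2))"

definition convex_conf_nondec :: "'a::euclidean_space set \<Rightarrow> 'a \<Rightarrow> bool" where
  "convex_conf_nondec P x \<longleftrightarrow> x \<in> P \<and>
     (\<forall>x1 x2 c. x1 \<in> P \<and> x2 \<in> P \<and> sign_le x1 x \<and> sign_le x2 x \<and> 0 < c \<and> c < 1
        \<and> x = c *\<^sub>R x1 + (1 - c) *\<^sub>R x2 \<longrightarrow> x1 = x2)"

end

theory Submission
  imports Defs
begin

lemma sign_le_prod: "sign_le (a, b) (c, d) \<longleftrightarrow> sign_le a c \<and> sign_le b d"
  unfolding sign_le_def Basis_prod_def ball_Un ball_simps by (simp add: inner_Pair)

lemma sign_le_real: "sign_le (t::real) s \<longleftrightarrow> (t = 0 \<or> sgn t = sgn s)"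
  unfolding sign_le_def by (auto simp: sgn_zero_iff)

lemma sign_le_vec_nonneg:
  fixes u v :: "real^'n"
  assumes "\<forall>i. 0 \<le> u $ i" "\<forall>i. 0 \<le> v $ i"
  shows "sign_le u (u + v)"
  unfolding sign_le_def
proof
  fix k :: "real^'n" assume "k \<in> Basis"
  then obtain j where k: "k = axis j 1" using axis_inverse by blast
  have "u \<bullet> k = u $ j" "(u+v) \<bullet> k = u $ j + v $ j" using k by (auto simp: inner_axis)
  then show "sgn (u \<bullet> k) = 0 \<or> sgn (u \<bullet> k) = sgn ((u + v) \<bullet> k)"
    using assms[rule_format, of j] by (auto simp: sgn_if)
qed

lemma sign_le_scale:
  fixes y :: "'a::euclidean_space"
  assumes "c > 0" shows "sign_le (c *\<^sub>R y) x \<longleftrightarrow> sign_le y x"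
  unfolding sign_le_def using assms by (auto simp: sgn_mult)

lemma sign_le_add_self:
  fixes y :: "'a::euclidean_space"
  assumes "sign_le y x" shows "sign_le (x + y) x"
  unfolding sign_le_def
proof
  fix i :: 'a assume i: "i \<in> Basis"
  then have "sgn (y \<bullet> i) = 0 \<or> sgn (y \<bullet> i) = sgn (x \<bullet> i)" using assms sign_le_def by blast
  then show "sgn ((x + y) \<bullet> i) = 0 \<or> sgn ((x + y) \<bullet> i) = sgn (x \<bullet> i)"
    by (auto simp: inner_add_left sgn_if split: if_splits)
qed

lemma sign_le_zero: "sign_le 0 x"
  unfolding sign_le_def by simp


theorem lemma3:
  fixes A :: "real^'r^'m" and b :: "real^'m"
  defines "P \<equiv> {x :: real^'r. \<forall>i. (A *v x) $ i \<ge> b $ i}"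
      and "Cr \<equiv> {x :: real^'r. \<forall>i. (A *v x) $ i \<ge> 0}"
      and "Ct \<equiv> {(x, \<xi>, A *v x - \<xi> *\<^sub>R b) | (x :: real^'r) (\<xi> :: real).
                   \<xi> \<ge> 0 \<and> (\<forall>i. (A *v x - \<xi> *\<^sub>R b) $ i \<ge> 0)}"
  shows "(\<forall>x\<in>Cr. x \<noteq> 0 \<longrightarrow>
            (conf_nondec Cr x \<longleftrightarrow> conf_nondec Ct (x, 0, A *v x)))
       \<and> (\<forall>x\<in>P. convex_conf_nondec P x \<longleftrightarrow> conf_nondec Ct (x, 1, A *v x - b))"
proof -
  have Ct_iff: "(y, \<xi>, s) \<in> Ct \<longleftrightarrow> \<xi> \<ge> 0 \<and> s = A *v y - \<xi> *\<^sub>R b \<and> (\<forall>i. 0 \<le> s $ i)"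
    for y \<xi> s unfolding Ct_def by auto
  have part1: "conf_nondec Cr x \<longleftrightarrow> conf_nondec Ct (x, 0, A *v x)"
    if x: "x \<in> Cr" "x \<noteq> 0" for x
  proof
    assume H: "conf_nondec Cr x"
    show "conf_nondec Ct (x, 0, A *v x)"
      unfolding conf_nondec_def
    proof (intro conjI allI impI)
      show "(x, 0, A *v x) \<in> Ct" using x by (simp add: Ct_iff Cr_def)
      show "(x, 0::real, A *v x) \<noteq> 0" using x by (simp add: zero_prod_def)
      fix z1 z2 :: "(real^'r) \<times> real \<times> (real^'m)"
      assume as: "z1 \<in> Ct \<and> z2 \<in> Ct \<and> z1 \<noteq> 0 \<and> z2 \<noteq> 0 \<and> sign_le z1 (x, 0, A *v x)
        \<and> sign_le z2 (x, 0, A *v x) \<and> (x, 0, A *v x) = z1 + z2"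
      obtain y1 \<xi>1 s1 where z1: "z1 = (y1, \<xi>1, s1)" by (cases z1) auto
      obtain y2 \<xi>2 s2 where z2: "z2 = (y2, \<xi>2, s2)" by (cases z2) auto
      have m1: "\<xi>1 \<ge> 0" "s1 = A *v y1 - \<xi>1 *\<^sub>R b" "\<forall>i. 0 \<le> s1 $ i"
        using as z1 Ct_iff by auto
      have m2: "\<xi>2 \<ge> 0" "s2 = A *v y2 - \<xi>2 *\<^sub>R b" "\<forall>i. 0 \<le> s2 $ i"
        using as z2 Ct_iff by auto
      have sg1: "sign_le y1 x" "sign_le \<xi>1 (0::real)" using as z1 by (auto simp: sign_le_prod)
      have sg2: "sign_le y2 x" "sign_le \<xi>2 (0::real)" using as z2 by (auto simp: sign_le_prod)
      have "\<xi>1 = 0" "\<xi>2 = 0" using sg1(2) sg2(2) by (auto simp: sign_le_real sgn_zero_iff)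
      then have s: "s1 = A *v y1" "s2 = A *v y2" using m1 m2 by auto
      have y1: "y1 \<in> Cr" "y1 \<noteq> 0" using m1 s as z1 \<open>\<xi>1 = 0\<close> by (auto simp: Cr_def zero_prod_def)
      have y2: "y2 \<in> Cr" "y2 \<noteq> 0" using m2 s as z2 \<open>\<xi>2 = 0\<close> by (auto simp: Cr_def zero_prod_def)
      have "x = y1 + y2" using as z1 z2 by simp
      then obtain c where c: "c > 0" "y1 = c *\<^sub>R y2"
        using H y1 y2 sg1 sg2 unfolding conf_nondec_def by blast
      show "\<exists>c>0. z1 = c *\<^sub>R z2"
        using c z1 z2 s \<open>\<xi>1 = 0\<close> \<open>\<xi>2 = 0\<close> by (auto simp: matrix_vector_mult_scaleR)
    qed
  next
    assume H: "conf_nondec Ct (x, 0, A *v x)"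
    show "conf_nondec Cr x"
      unfolding conf_nondec_def
    proof (intro conjI allI impI)
      show "x \<in> Cr" "x \<noteq> 0" using x by auto
      fix y1 y2 assume as: "y1 \<in> Cr \<and> y2 \<in> Cr \<and> y1 \<noteq> 0 \<and> y2 \<noteq> 0 \<and> sign_le y1 x \<and> sign_le y2 x \<and> x = y1 + y2"
      have Ax: "A *v x = A *v y1 + A *v y2" using as by (simp add: matrix_vector_right_distrib)
      have n1: "\<forall>i. 0 \<le> (A *v y1) $ i" and n2: "\<forall>i. 0 \<le> (A *v y2) $ i" using as by (auto simp: Cr_def)
      have "sign_le (A *v y1) (A *v x)" using sign_le_vec_nonneg[OF n1 n2] Ax by simp
      moreover have "sign_le (A *v y2) (A *v x)" using sign_le_vec_nonneg[OF n2 n1] Ax by (simp add: add.commute)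
      ultimately have "\<exists>c>0. (y1, 0::real, A *v y1) = c *\<^sub>R (y2, 0, A *v y2)"
        using H as n1 n2 Ax unfolding conf_nondec_def
        apply (elim conjE)
        apply (erule allE[of _ "(y1, 0::real, A *v y1)"], erule allE[of _ "(y2, 0::real, A *v y2)"])
        by (auto simp: Ct_iff sign_le_prod sign_le_real zero_prod_def)
      then show "\<exists>c>0. y1 = c *\<^sub>R y2" by auto
    qed
  qed
  have part2: "convex_conf_nondec P x \<longleftrightarrow> conf_nondec Ct (x, 1, A *v x - b)"
    if x: "x \<in> P" for x
  proof
    assume H: "convex_conf_nondec P x"
    show "conf_nondec Ct (x, 1, A *v x - b)"
      unfolding conf_nondec_def
    proof (intro conjI allI impI)
      show "(x, 1, A *v x - b) \<in> Ct" using x by (simp add: Ct_iff P_def)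
      show "(x, 1::real, A *v x - b) \<noteq> 0" by (simp add: zero_prod_def)
      fix z1 z2 :: "(real^'r) \<times> real \<times> (real^'m)"
      assume as: "z1 \<in> Ct \<and> z2 \<in> Ct \<and> z1 \<noteq> 0 \<and> z2 \<noteq> 0 \<and> sign_le z1 (x, 1, A *v x - b)
        \<and> sign_le z2 (x, 1, A *v x - b) \<and> (x, 1, A *v x - b) = z1 + z2"
      obtain y1 \<xi>1 s1 where z1: "z1 = (y1, \<xi>1, s1)" by (cases z1) auto
      obtain y2 \<xi>2 s2 where z2: "z2 = (y2, \<xi>2, s2)" by (cases z2) auto
      have m1: "\<xi>1 \<ge> 0" "s1 = A *v y1 - \<xi>1 *\<^sub>R b" "\<forall>i. 0 \<le> s1 $ i"
        using as z1 Ct_iff by auto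
      have m2: "\<xi>2 \<ge> 0" "s2 = A *v y2 - \<xi>2 *\<^sub>R b" "\<forall>i. 0 \<le> s2 $ i"
        using as z2 Ct_iff by auto
      have sg1: "sign_le y1 x" using as z1 by (auto simp: sign_le_prod)
      have sg2: "sign_le y2 x" using as z2 by (auto simp: sign_le_prod)
      have sum: "x = y1 + y2" "\<xi>1 + \<xi>2 = 1" using as z1 z2 by auto
      have nz1: "y1 \<noteq> 0 \<or> \<xi>1 \<noteq> 0" using as z1 m1 by (auto simp: zero_prod_def)
      have nz2: "y2 \<noteq> 0 \<or> \<xi>2 \<noteq> 0" using as z2 m2 by (auto simp: zero_prod_def)
      have noray: False if "y \<noteq> 0" "\<forall>i. 0 \<le> (A *v y) $ i" "sign_le y x" "sign_le (x - y) x"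
        "x - y \<in> P" for y
      proof -
        have "x + y \<in> P" using x that(2) by (auto simp: P_def matrix_vector_right_distrib intro: add_increasing2)
        moreover have "sign_le (x + y) x" using sign_le_add_self[OF that(3)] .
        moreover have "x = (1/2) *\<^sub>R (x + y) + (1 - 1/2) *\<^sub>R (x - y)" by (simp add: scaleR_add_right scaleR_diff_right flip: scaleR_add_left)
        ultimately have "x + y = x - y"
          using H[unfolded convex_conf_nondec_def, THEN conjunct2, rule_format, of "x+y" "x-y" "1/2"] that(4,5)
          by simp
        then have "(2::real) *\<^sub>R y = 0" by (simp add: scaleR_2 algebra_simps)
        then have "y = 0" by simp
        then show False using that(1) by simp
      qed
      have "\<xi>1 \<noteq> 0"
      proof
        assume e: "\<xi>1 = 0"
        show False
        proof (rule noray[of y1])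
          show "y1 \<noteq> 0" using nz1 e by simp
          show "\<forall>i. 0 \<le> (A *v y1) $ i" using m1 e by simp
          show "sign_le y1 x" by fact
          show "sign_le (x - y1) x" using sg2 sum by simp
          show "x - y1 \<in> P" using m2 sum e by (auto simp: P_def)
        qed
      qed
      moreover have "\<xi>2 \<noteq> 0"
      proof
        assume e: "\<xi>2 = 0"
        show False
        proof (rule noray[of y2])
          show "y2 \<noteq> 0" using nz2 e by simp
          show "\<forall>i. 0 \<le> (A *v y2) $ i" using m2 e by simp
          show "sign_le y2 x" by fact
          show "sign_le (x - y2) x" using sg1 sum by simp
          show "x - y2 \<in> P" using m1 sum e by (auto simp: P_def)
        qed
      qed
      ultimately have p1: "\<xi>1 > 0" and p2: "\<xi>2 > 0" using m1 m2 by auto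
      define x1 where "x1 = (1/\<xi>1) *\<^sub>R y1"
      define x2 where "x2 = (1/\<xi>2) *\<^sub>R y2"
      have y1e: "y1 = \<xi>1 *\<^sub>R x1" using p1 by (simp add: x1_def)
      have y2e: "y2 = \<xi>2 *\<^sub>R x2" using p2 by (simp add: x2_def)
      have inP: "xk \<in> P" if "\<xi> > 0" "y = \<xi> *\<^sub>R xk" "\<forall>i. 0 \<le> (A *v y - \<xi> *\<^sub>R b) $ i" for xk y \<xi>
      proof -
        have "\<forall>i. 0 \<le> \<xi> * ((A *v xk) $ i - b $ i)" using that(2,3)
          by (simp add: matrix_vector_mult_scaleR algebra_simps)
        then show ?thesis using that(1) by (auto simp: P_def zero_le_mult_iff)
      qed
      have x1P: "x1 \<in> P" using inP[OF p1 y1e] m1 by simp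
      have x2P: "x2 \<in> P" using inP[OF p2 y2e] m2 by simp
      have sx1: "sign_le x1 x" using sg1 p1 by (simp add: x1_def sign_le_scale)
      have sx2: "sign_le x2 x" using sg2 p2 by (simp add: x2_def sign_le_scale)
      have "x = \<xi>1 *\<^sub>R x1 + (1 - \<xi>1) *\<^sub>R x2" proof -
        have "1 - \<xi>1 = \<xi>2" using sum by simp
        then show ?thesis using sum(1) y1e y2e by simp
      qed
      moreover have "\<xi>1 < 1" using sum p2 by simp
      ultimately have "x1 = x2" using H x1P x2P sx1 sx2 p1 unfolding convex_conf_nondec_def by blast
      show "\<exists>c>0. z1 = c *\<^sub>R z2"
      proof (intro exI conjI)
        show "\<xi>1/\<xi>2 > 0" using p1 p2 by simp
        show "z1 = (\<xi>1/\<xi>2) *\<^sub>R z2"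
          using z1 z2 m1 m2 y1e y2e \<open>x1 = x2\<close> p2
          by (simp add: matrix_vector_mult_scaleR algebra_simps)
      qed
    qed
  next
    assume H: "conf_nondec Ct (x, 1, A *v x - b)"
    show "convex_conf_nondec P x"
      unfolding convex_conf_nondec_def
    proof (intro conjI allI impI)
      show "x \<in> P" by fact
      fix x1 x2 c assume as: "x1 \<in> P \<and> x2 \<in> P \<and> sign_le x1 x \<and> sign_le x2 x \<and> 0 < c \<and> c < 1
        \<and> x = c *\<^sub>R x1 + (1 - c) *\<^sub>R x2"
      define w1 where "w1 = (x1, 1::real, A *v x1 - b)"
      define w2 where "w2 = (x2, 1::real, A *v x2 - b)"
      have n1: "\<forall>i. 0 \<le> (c *\<^sub>R (A *v x1 - b)) $ i" using as by (auto simp: P_def)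
      have n2: "\<forall>i. 0 \<le> ((1 - c) *\<^sub>R (A *v x2 - b)) $ i" using as by (auto simp: P_def)
      have Ax: "A *v x - b = c *\<^sub>R (A *v x1 - b) + (1 - c) *\<^sub>R (A *v x2 - b)"
      proof -
        have xe: "x = c *\<^sub>R x1 + (1 - c) *\<^sub>R x2" using as by simp
        show ?thesis by (subst xe) (simp add: matrix_vector_right_distrib matrix_vector_mult_scaleR algebra_simps)
      qed
      have "c *\<^sub>R w1 \<in> Ct" using as n1 by (simp add: w1_def Ct_iff matrix_vector_mult_scaleR algebra_simps)
      moreover have "(1 - c) *\<^sub>R w2 \<in> Ct" using as n2 by (simp add: w2_def Ct_iff matrix_vector_mult_scaleR algebra_simps)
      moreover have "c *\<^sub>R w1 \<noteq> 0" "(1 - c) *\<^sub>R w2 \<noteq> 0" using as by (auto simp: w1_def w2_def zero_prod_def)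
      moreover have "sign_le (c *\<^sub>R w1) (x, 1, A *v x - b)"
        using as sign_le_vec_nonneg[OF n1 n2] Ax
        by (auto simp: w1_def sign_le_prod sign_le_scale sign_le_real)
      moreover have "sign_le ((1 - c) *\<^sub>R w2) (x, 1, A *v x - b)"
        using as sign_le_vec_nonneg[OF n2 n1] Ax
        by (auto simp: w2_def sign_le_prod sign_le_scale sign_le_real add.commute)
      moreover have "(x, 1, A *v x - b) = c *\<^sub>R w1 + (1 - c) *\<^sub>R w2"
        using as Ax by (simp add: w1_def w2_def)
      ultimately obtain d where d: "d > 0" "c *\<^sub>R w1 = d *\<^sub>R ((1 - c) *\<^sub>R w2)"
        using H unfolding conf_nondec_def by blast
      then have "c = d * (1 - c)" "c *\<^sub>R x1 = (d * (1 - c)) *\<^sub>R x2" by (auto simp: w1_def w2_def)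
      then have "c *\<^sub>R x1 = c *\<^sub>R x2" by simp
      then show "x1 = x2" using as by simp
    qed
  qed
  show ?thesis using part1 part2 by blast
qed

end
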